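(* Let $L$ be any linear order. Then $L/\!\sim_\omega \;\cong 1$ (i.e. $L$ has exactly one $\sim_\omega$-class, or more precisely all elements of $L$ are $\sim_\omega$-equivalent) if and only if $L$ is isomorphic to a suborder of $U$.
   Context: For a linear order $L$ and $x,y\in L$, write $[\{x,y\}]$ for the closed interval between $x$ and $y$ (i.e. $[x,y]$ if $x\le y$, $[y,x]$ otherwise). The countable condensation $\sim_\omega$ on $L$ is defined by $x\sim_\omega y$ iff $|[\{x,y\}]|\le\aleph_0$; it is an equivalence relation whose classes are intervals, and $L/\!\sim_\omega$ is the linear order of classes (class $A<$ class $B$ iff every element of $A$ is below every element of $B$). $U$ (the "$\omega_1$-lengthened rational line") is the linear order with point set $\{u_\alpha:\alpha<\omega_1\}\cup\{-u_\alpha:\alpha<\omega_1\}\cup\bigcup_{\alpha<\omega_1}\mathbb{Q}(\alpha)\cup\bigcup_{\alpha<\omega_1}\mathbb{Q}(-\alpha)\cup\mathbb{Q}(\mathrm{mid})$, where each $\mathbb{Q}(\cdot)$ is a copy of the rationals, ordered as follows: the right part $R=\{u_\alpha\}\cup\bigcup\mathbb{Q}(\alpha)$ is ordered by $u_\alpha<\mathbb{Q}(\alpha)<u_{\alpha+1}$ and $\{u_\alpha\}\cup\mathbb{Q}(\alpha)<\{u_\beta\}\cup\mathbb{Q}(\beta)$ for $\alpha<\beta$ (so $R$ is $\omega_1$ with each point replaced by a point followed by a copy of $\mathbb{Q}$); the left part $\{-u_\alpha\}\cup\bigcup\mathbb{Q}(-\alpha)$ is ordered as the reverse of $R$ (so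 $-u_{\alpha+1}<\mathbb{Q}(-\alpha)<-u_\alpha$ and the blocks for larger $\alpha$ lie further left); and $U=(\text{left part})+\mathbb{Q}(\mathrm{mid})+R$, i.e. $-u_0<\mathbb{Q}(\mathrm{mid})<u_0$. *)

theory Defs
  imports Main "HOL-Library.Countable_Set"
begin

text \<open>A linear order is represented as a subset L of a type of class linorder
  (with the induced order). Closed interval between x and y inside L.\<close>

definition cinterval :: "'a::linorder set \<Rightarrow> 'a \<Rightarrow> 'a \<Rightarrow> 'a set" where
  "cinterval L x y = {z \<in> L. min x y \<le> z \<and> z \<le> max x y}"

definition sim_omega :: "'a::linorder set \<Rightarrow> 'a \<Rightarrow> 'a \<Rightarrow> bool" where
  "sim_omega L x y \<longleftrightarrow> countable (cinterval L x y)"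

text \<open>omega_1 is the cardinal successor of natLeq (an initial, well-order relation
  of order type omega_1); its points live in type nat set.\<close>

definition omega1 :: "nat set rel" where
  "omega1 = cardSuc natLeq"

definition w_less :: "nat set \<Rightarrow> nat set \<Rightarrow> bool" where
  "w_less a b \<longleftrightarrow> (a, b) \<in> omega1 \<and> a \<noteq> b"

text \<open>Points of U: Mid q is q in Q(mid); RPt a = u_a; RQ a q is q in Q(a);
  LPt a = -u_a; LQ a q is q in Q(-a).\<close>

datatype upoint = Mid rat | RPt "nat set" | RQ "nat set" rat | LPt "nat set" | LQ "nat set" rat

definition U_carrier :: "upoint set" where
  "U_carrier = range Mid \<union> RPt ` Field omega1 \<union> (\<lambda>(a,q). RQ a q) ` (Field omega1 \<times> UNIV)
     \<union> LPt ` Field omega1 \<union> (\<lambda>(a,q). LQ a q) ` (Field omega1 \<times> UNIV)"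

text \<open>Lexicographic key for the right part R: u_a corresponds to (a, False, 0),
  q in Q(a) to (a, True, q). Order: u_a < Q(a) < u_b < Q(b) for a < b.\<close>

definition rkey_less :: "nat set \<times> bool \<times> rat \<Rightarrow> nat set \<times> bool \<times> rat \<Rightarrow> bool" where
  "rkey_less k1 k2 = (case k1 of (a, f, q) \<Rightarrow> case k2 of (b, g, r) \<Rightarrow>
      w_less a b \<or> (a = b \<and> ((\<not> f \<and> g) \<or> (f \<and> g \<and> q < r))))"

fun upart :: "upoint \<Rightarrow> nat" where
  "upart (LPt a) = 0" | "upart (LQ a q) = 0" | "upart (Mid q) = 1"
| "upart (RPt a) = 2" | "upart (RQ a q) = 2"

fun ukey :: "upoint \<Rightarrow> nat set \<times> bool \<times> rat" where
  "ukey (LPt a) = (a, False, 0)" | "ukey (LQ a q) = (a, True, q)"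
| "ukey (RPt a) = (a, False, 0)" | "ukey (RQ a q) = (a, True, q)"
| "ukey (Mid q) = ({}, True, q)"

text \<open>Strict order of U: left part < Q(mid) < right part; the left part is the
  reverse of R.\<close>

definition U_less :: "upoint \<Rightarrow> upoint \<Rightarrow> bool" where
  "U_less x y \<longleftrightarrow>
     upart x < upart y
   \<or> (upart x = 2 \<and> upart y = 2 \<and> rkey_less (ukey x) (ukey y))
   \<or> (upart x = 0 \<and> upart y = 0 \<and> rkey_less (ukey y) (ukey x))
   \<or> (upart x = 1 \<and> upart y = 1 \<and> snd (snd (ukey x)) < snd (snd (ukey y)))"

definition embeds_in_U :: "'a::linorder set \<Rightarrow> bool" where
  "embeds_in_U L \<longleftrightarrow> (\<exists>f. inj_on f L \<and> f ` L \<subseteq> U_carrier \<and>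
      (\<forall>x\<in>L. \<forall>y\<in>L. x < y \<longleftrightarrow> U_less (f x) (f y)))"

end

theory Submission imports Defs "HOL-Library.Countable_Set_Type" begin
unbundle cardinal_syntax

lemma om1_wo: "Well_order omega1"
  unfolding omega1_def by (simp add: cardSuc_Well_order natLeq_Card_order)

lemma om1_under_countable:
  assumes "a \<in> Field omega1" shows "countable {b. (b,a) \<in> omega1}"
proof -
  have "|underS omega1 a| <o cardSuc natLeq"
    using card_of_underS[OF cardSuc_Card_order[OF natLeq_Card_order]] assms
    unfolding omega1_def by blast
  hence "|underS omega1 a| \<le>o natLeq"
    using cardSuc_ordLeq_ordLess[OF natLeq_Card_order card_of_Card_order] by blast
  hence "countable (underS omega1 a)" using countable_card_le_natLeq by blast
  moreover have "{b. (b,a) \<in> omega1} \<subseteq> insert a (underS omega1 a)"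
    by (auto simp: underS_def)
  ultimately show ?thesis by (meson countable_insert countable_subset)
qed

lemma om1_uncountable: "\<not> countable (Field omega1)"
proof
  assume "countable (Field omega1)"
  hence "|Field omega1| \<le>o natLeq" using countable_card_le_natLeq by blast
  moreover have "|Field omega1| =o omega1"
    unfolding omega1_def by (simp add: card_of_Field_ordIso cardSuc_Card_order natLeq_Card_order)
  ultimately have "omega1 \<le>o natLeq"
    using ordIso_ordLeq_trans ordIso_symmetric by blast
  moreover have "natLeq <o omega1" unfolding omega1_def by (simp add: cardSuc_greater natLeq_Card_order)
  ultimately show False using not_ordLess_ordLeq by blast
qed

lemma geo_tail:
  fixes a :: "nat \<Rightarrow> nat"
  assumes "\<forall>k. a k \<le> 2" "j \<le> n"
  shows "(\<Sum>k<Suc n. of_nat (a k) / 3^k :: rat) \<le> (\<Sum>k<Suc j. of_nat (a k) / 3^k) + (1/3^j - 1/3^n)"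
  using assms(2)
proof (induction n rule: dec_induct)
  case base then show ?case by simp
next
  case (step n)
  have "of_nat (a (Suc n)) / 3^Suc n \<le> (2::rat) / 3^Suc n"
    using assms(1) by (intro divide_right_mono) (auto simp: of_nat_le_iff[symmetric])
  also have "\<dots> = 1/3^n - 1/3^Suc n" by (simp add: field_simps)
  finally show ?case using step by (simp add: sum.lessThan_Suc)
qed

lemma prefix_le:
  fixes b :: "nat \<Rightarrow> nat"
  assumes "j \<le> m"
  shows "(\<Sum>k<Suc j. of_nat (b k) / 3^k :: rat) \<le> (\<Sum>k<Suc m. of_nat (b k) / 3^k)"
  by (rule sum_mono2) (use assms in auto)

lemma digit_compare:
  fixes a b :: "nat \<Rightarrow> nat"
  assumes "\<forall>k. a k \<le> 2" "j \<le> n" "j \<le> m" "\<forall>k<j. a k = b k" "a j < b j"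
  shows "(\<Sum>k<Suc n. of_nat (a k) / 3^k :: rat) < (\<Sum>k<Suc m. of_nat (b k) / 3^k)"
proof -
  have pre: "(\<Sum>k<j. of_nat (a k) / 3^k :: rat) = (\<Sum>k<j. of_nat (b k) / 3^k)"
    using assms(4) by (intro sum.cong) auto
  have "of_nat (a j) + 1 \<le> (of_nat (b j) :: rat)" using assms(5)
    by (metis Suc_leI of_nat_Suc of_nat_le_iff add.commute)
  hence d: "of_nat (a j) / 3^j + 1/3^j \<le> (of_nat (b j) :: rat) / 3^j"
    by (simp add: add_divide_distrib[symmetric] divide_right_mono)
  have "(\<Sum>k<Suc n. of_nat (a k) / 3^k :: rat) \<le> (\<Sum>k<Suc j. of_nat (a k) / 3^k) + (1/3^j - 1/3^n)"
    using geo_tail assms by blast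
  also have "\<dots> < (\<Sum>k<Suc j. of_nat (a k) / 3^k) + 1/3^j" by simp
  also have "\<dots> \<le> (\<Sum>k<Suc j. of_nat (b k) / 3^k)"
    using pre d by (simp add: sum.lessThan_Suc)
  also have "\<dots> \<le> (\<Sum>k<Suc m. of_nat (b k) / 3^k)" using prefix_le assms by blast
  finally show ?thesis .
qed

lemma countable_embed_rat:
  fixes less :: "'b \<Rightarrow> 'b \<Rightarrow> bool"
  assumes cA: "countable A"
    and tr: "\<forall>x\<in>A. \<forall>y\<in>A. \<forall>z\<in>A. less x y \<longrightarrow> less y z \<longrightarrow> less x z"
    and irr: "\<forall>x\<in>A. \<not> less x x"
    and tot: "\<forall>x\<in>A. \<forall>y\<in>A. x \<noteq> y \<longrightarrow> less x y \<or> less y x"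
  shows "\<exists>q::'b \<Rightarrow> rat. \<forall>x\<in>A. \<forall>y\<in>A. less x y \<longrightarrow> q x < q y"
proof (cases "A = {}")
  case True then show ?thesis by auto
next
  case False
  define e where "e = from_nat_into A"
  define N where "N = to_nat_on A"
  define d where "d = (\<lambda>x k. if less (e k) x then 2 else if e k = x then 1 else (0::nat))"
  define q where "q = (\<lambda>x. \<Sum>k<Suc (N x). of_nat (d x k) / 3^k :: rat)"
  have eA: "e k \<in> A" for k using False by (simp add: e_def from_nat_into)
  have eN: "x \<in> A \<Longrightarrow> e (N x) = x" for x using cA by (simp add: e_def N_def)
  have "q x < q y" if x: "x \<in> A" and y: "y \<in> A" and lxy: "less x y" for x y
  proof -
    have xy: "x \<noteq> y" using irr lxy y by blast
    have nyx: "\<not> less y x" using tr lxy x y irr by blast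
    have mono: "d x k \<le> d y k" for k
    proof -
      have t: "less (e k) x \<Longrightarrow> less (e k) y" using tr eA[of k] x y lxy by blast
      show ?thesis unfolding d_def using t lxy nyx by simp
    qed
    have d2: "d x k \<le> 2" for k unfolding d_def by simp
    define m where "m = min (N x) (N y)"
    have dm: "d x m \<noteq> d y m"
    proof (cases "N x \<le> N y")
      case True
      then have "e m = x" using eN x by (simp add: m_def)
      then show ?thesis using lxy irr x unfolding d_def by simp
    next
      case False
      then have "e m = y" using eN y by (simp add: m_def)
      then show ?thesis using xy irr y nyx unfolding d_def by simp
    qed
    define j where "j = (LEAST k. d x k \<noteq> d y k)"
    have jm: "j \<le> m" unfolding j_def using dm by (rule Least_le)
    have dj: "d x j \<noteq> d y j" unfolding j_def using dm by (rule LeastI)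
    have pre: "\<forall>k<j. d x k = d y k" unfolding j_def using not_less_Least by blast
    have djl: "d x j < d y j" using dj mono[of j] by simp
    have "(\<Sum>k<Suc (N x). of_nat (d x k) / 3^k :: rat) < (\<Sum>k<Suc (N y). of_nat (d y k) / 3^k)"
      by (rule digit_compare[OF _ _ _ pre djl]) (use jm d2 in \<open>auto simp: m_def\<close>)
    then show ?thesis unfolding q_def .
  qed
  then show ?thesis by blast
qed


lemma countable_embed_rat_sub:
  fixes less :: "'b \<Rightarrow> 'b \<Rightarrow> bool"
  assumes cA: "countable A" and AS: "A \<subseteq> S"
    and tr: "\<forall>x\<in>S. \<forall>y\<in>S. \<forall>z\<in>S. less x y \<longrightarrow> less y z \<longrightarrow> less x z"
    and irr: "\<forall>x\<in>S. \<not> less x x"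
    and tot: "\<forall>x\<in>S. \<forall>y\<in>S. x \<noteq> y \<longrightarrow> less x y \<or> less y x"
  shows "\<exists>q::'b \<Rightarrow> rat. \<forall>x\<in>A. \<forall>y\<in>A. less x y \<longrightarrow> q x < q y"
proof (rule countable_embed_rat[OF cA])
  show "\<forall>x\<in>A. \<forall>y\<in>A. \<forall>z\<in>A. less x y \<longrightarrow> less y z \<longrightarrow> less x z" using tr AS by blast
  show "\<forall>x\<in>A. \<not> less x x" using irr AS by blast
  show "\<forall>x\<in>A. \<forall>y\<in>A. x \<noteq> y \<longrightarrow> less x y \<or> less y x" using tot AS by blast
qed

lemma core_embed:
  fixes less :: "'b \<Rightarrow> 'b \<Rightarrow> bool"
  assumes tr: "\<forall>x\<in>S. \<forall>y\<in>S. \<forall>z\<in>S. less x y \<longrightarrow> less y z \<longrightarrow> less x z"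
    and irr: "\<forall>x\<in>S. \<not> less x x"
    and tot: "\<forall>x\<in>S. \<forall>y\<in>S. x \<noteq> y \<longrightarrow> less x y \<or> less y x"
    and cnt: "\<forall>y\<in>S. countable {z\<in>S. less z y}"
  shows "\<exists>(i::'b \<Rightarrow> nat set) (q::'b \<Rightarrow> rat). (\<forall>y\<in>S. i y \<in> Field omega1) \<and>
     (\<forall>x\<in>S. \<forall>y\<in>S. less x y \<longleftrightarrow> rkey_less (i x, True, q x) (i y, True, q y))"
proof -
  obtain W where W: "well_order_on S W" using well_order_on by blast
  have WO: "Well_order W" and FW: "Field W = S"
    using W well_order_on_Field well_order_on_Well_order by blast+
  have wo: "wo_rel W" using WO by (simp add: wo_rel_def)
  define C where "C = {c\<in>S. \<forall>z\<in>S. (z,c) \<in> W \<and> z \<noteq> c \<longrightarrow> less z c}"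
  define B where "B = (\<lambda>y. {z\<in>S. z = y \<or> less y z})"
  define cm where "cm = (\<lambda>y. wo_rel.minim W (B y))"
  have cmB: "y \<in> S \<Longrightarrow> cm y \<in> B y" for y
    unfolding cm_def using wo_rel.minim_in[OF wo, of "B y"] FW by (auto simp: B_def)
  have cmL: "y \<in> S \<Longrightarrow> z \<in> B y \<Longrightarrow> (cm y, z) \<in> W" for y z
    unfolding cm_def using wo_rel.minim_least[OF wo, of "B y"] FW by (auto simp: B_def)
  have cmC: "y \<in> S \<Longrightarrow> cm y \<in> C" for y
  proof -
    assume y: "y \<in> S"
    have c: "cm y \<in> S" "cm y = y \<or> less y (cm y)" using cmB[OF y] by (auto simp: B_def)
    have "less z (cm y)" if z: "z \<in> S" "(z, cm y) \<in> W" "z \<noteq> cm y" for z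
    proof (rule ccontr)
      assume nl: "\<not> less z (cm y)"
      have "z \<in> B y"
      proof (cases "z = y")
        case False
        hence "less y z \<or> less z y" using tot y z by blast
        moreover have "\<not> less z y"
        proof
          assume lz: "less z y"
          show False
          proof (cases "cm y = y")
            case True then show False using lz nl by simp
          next
            case False then have "less y (cm y)" using c by blast
            then show False using tr[rule_format, OF z(1) y c(1) lz] nl by blast
          qed
        qed
        ultimately show ?thesis using z by (auto simp: B_def)
      qed (use z in \<open>auto simp: B_def\<close>)
      hence "(cm y, z) \<in> W" using cmL y by blast
      moreover have "antisym W" using WO unfolding well_order_on_def linear_order_on_def partial_order_on_def by blast
      ultimately show False using z(2,3) unfolding antisym_def by blast
    qed
    thus ?thesis using c unfolding C_def by blast
  qed
  define Wc where "Wc = Restr W C"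
  have WcO: "Well_order Wc" unfolding Wc_def using WO Well_order_Restr by blast
  have CS: "C \<subseteq> S" unfolding C_def by blast
  have reflW: "Refl W" using WO unfolding well_order_on_def linear_order_on_def partial_order_on_def preorder_on_def by blast
  have FWc: "Field Wc = C" unfolding Wc_def
    using Refl_Field_Restr2[OF reflW, of C] CS FW by simp
  have "\<not> omega1 <o Wc"
  proof
    assume ol: "omega1 <o Wc"
    have "\<exists>a\<in>Field Wc. omega1 =o Restr Wc (underS Wc a)"
      using iffD1[OF ordLess_iff_ordIso_Restr[OF WcO om1_wo] ol] .
    then obtain a where a: "a \<in> Field Wc" "omega1 =o Restr Wc (underS Wc a)" by (elim bexE)
    have aC: "a \<in> C" using a(1) FWc by simp
    have aS: "a \<in> S" using aC CS by blast
    have l1: "|Field omega1| \<le>o |Field (Restr Wc (underS Wc a))|"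
      by (rule card_of_mono2) (rule conjunct1[OF ordIso_iff_ordLeq[THEN iffD1, OF a(2)]])
    have "underS Wc a \<subseteq> {z\<in>S. less z a}"
    proof
      fix z assume "z \<in> underS Wc a"
      then have z: "(z, a) \<in> W" "z \<in> C" "z \<noteq> a" unfolding underS_def Wc_def by auto
      then have "z \<in> S" using CS by blast
      then show "z \<in> {z\<in>S. less z a}" using aC z unfolding C_def by blast
    qed
    then have sub: "Field (Restr Wc (underS Wc a)) \<subseteq> {z\<in>S. less z a}"
      by (rule order_trans[OF Field_Restr_subset])
    have l2: "|Field omega1| \<le>o |{z\<in>S. less z a}|"
      using ordLeq_transitive[OF l1 card_of_mono1[OF sub]] .
    have "countable {z\<in>S. less z a}" using cnt aS by blast
    then have "|{z\<in>S. less z a}| \<le>o natLeq" by (rule countable_card_le_natLeq[THEN iffD1])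
    then have "|Field omega1| \<le>o natLeq" by (rule ordLeq_transitive[OF l2])
    then have "countable (Field omega1)" by (rule countable_card_le_natLeq[THEN iffD2])
    thus False using om1_uncountable by blast
  qed
  hence "Wc \<le>o omega1" using ordLess_or_ordLeq[OF om1_wo WcO] by (elim disjE) simp_all
  then have "\<exists>e. embed Wc omega1 e" unfolding ordLeq_def by simp
  then obtain e where e: "embed Wc omega1 e" by (elim exE)
  have einj: "inj_on e C" using embed_inj_on[OF WcO e] FWc by simp
  have eF: "e c \<in> Field omega1" if "c \<in> C" for c using embed_Field[OF e] FWc that by blast
  have ecomp: "(c, c') \<in> Wc \<Longrightarrow> (e c, e c') \<in> omega1" for c c'
    using embed_compat[OF e] by (auto simp: compat_def)
  define i where "i = (\<lambda>y. e (cm y))"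
  have om_anti: "antisym omega1" using om1_wo
    unfolding well_order_on_def linear_order_on_def partial_order_on_def by blast
  have imono: "(i x, i y) \<in> omega1" if x: "x \<in> S" and y: "y \<in> S" and l: "less x y" for x y
  proof -
    have cy: "cm y \<in> S" "cm y = y \<or> less y (cm y)" using cmB[OF y] unfolding B_def by auto
    have "less x (cm y)"
    proof (cases "cm y = y")
      case True then show ?thesis using l by simp
    next
      case False then have "less y (cm y)" using cy by blast
      then show ?thesis using tr[rule_format, OF x y cy(1) l] by blast
    qed
    then have "cm y \<in> B x" using cy(1) unfolding B_def by blast
    hence "(cm x, cm y) \<in> W" using cmL x by blast
    hence "(cm x, cm y) \<in> Wc" using cmC x y unfolding Wc_def by blast
    thus ?thesis unfolding i_def by (rule ecomp)
  qed
  define G where "G = (\<lambda>y. {z\<in>S. cm z = cm y})"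
  have Gc: "y \<in> S \<Longrightarrow> countable (G y)" for y
  proof -
    assume y: "y \<in> S"
    have sub: "G y \<subseteq> insert (cm y) {z\<in>S. less z (cm y)}"
    proof
      fix z assume "z \<in> G y"
      hence z: "z \<in> S" "cm z = cm y" by (auto simp: G_def)
      have "cm z = z \<or> less z (cm z)" using cmB[OF z(1)] by (simp add: B_def)
      thus "z \<in> insert (cm y) {z\<in>S. less z (cm y)}" using z by auto
    qed
    have cyS: "cm y \<in> S" using cmC CS y by blast
    have c: "countable {z\<in>S. less z (cm y)}" using cnt cyS by blast
    show ?thesis by (rule countable_subset[OF sub]) (rule countable_insert[OF c])
  qed
  define qe where "qe = (\<lambda>A. SOME q::'b \<Rightarrow> rat. \<forall>x\<in>A. \<forall>y\<in>A. less x y \<longrightarrow> q x < q y)"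
  have qe: "y \<in> S \<Longrightarrow> \<forall>x\<in>G y. \<forall>z\<in>G y. less x z \<longrightarrow> qe (G y) x < qe (G y) z" for y
  proof -
    assume y: "y \<in> S"
    have GS: "G y \<subseteq> S" unfolding G_def by blast
    have ex: "\<exists>q::'b \<Rightarrow> rat. \<forall>x\<in>G y. \<forall>z\<in>G y. less x z \<longrightarrow> q x < q z"
      by (rule countable_embed_rat_sub[OF Gc[OF y] GS tr irr tot])
    show ?thesis unfolding qe_def by (rule someI_ex[OF ex])
  qed
  define q where "q = (\<lambda>y. qe (G y) y)"
  have Geq: "x \<in> S \<Longrightarrow> y \<in> S \<Longrightarrow> i x = i y \<Longrightarrow> G x = G y \<and> x \<in> G y \<and> y \<in> G y" for x y
  proof -
    assume x: "x \<in> S" and y: "y \<in> S" and ixy: "i x = i y"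
    have "cm x = cm y" using inj_onD[OF einj ixy[unfolded i_def] cmC[OF x] cmC[OF y]] .
    then show ?thesis using x y unfolding G_def by simp
  qed
  have main: "less x y \<longleftrightarrow> rkey_less (i x, True, q x) (i y, True, q y)" if x: "x \<in> S" and y: "y \<in> S" for x y
  proof
    assume l: "less x y"
    show "rkey_less (i x, True, q x) (i y, True, q y)"
    proof (cases "i x = i y")
      case True
      then have g: "G x = G y" "x \<in> G y" "y \<in> G y" using Geq x y by blast+
      have "qe (G y) x < qe (G y) y" using qe[OF y, rule_format, OF g(2) g(3) l] .
      then have "q x < q y" unfolding q_def using g(1) by simp
      then show ?thesis using True by (simp add: rkey_less_def)
    next
      case False
      then show ?thesis using imono[OF x y l] by (simp add: rkey_less_def w_less_def)
    qed
  next
    assume r: "rkey_less (i x, True, q x) (i y, True, q y)"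
    show "less x y"
    proof (rule ccontr)
      assume nl: "\<not> less x y"
      show False
      proof (cases "x = y")
        case True then show False using r by (simp add: rkey_less_def w_less_def)
      next
        case False
        then have l: "less y x" using tot x y nl by blast
        have iyx: "(i y, i x) \<in> omega1" using imono[OF y x l] .
        show False
        proof (cases "i x = i y")
          case True
          then have g: "G x = G y" "x \<in> G y" "y \<in> G y" using Geq x y by blast+
          have "qe (G y) y < qe (G y) x" using qe[OF y, rule_format, OF g(3) g(2) l] .
          then have "q y < q x" unfolding q_def using g(1) by simp
          then show False using r True by (simp add: rkey_less_def w_less_def)
        next
          case False
          then have "(i x, i y) \<in> omega1" using r by (simp add: rkey_less_def w_less_def)
          then show False using antisymD[OF om_anti _ iyx] False by blast
        qed
      qed
    qed
  qed
  have "\<forall>y\<in>S. i y \<in> Field omega1" using eF cmC unfolding i_def by blast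
  then show ?thesis using main by blast
qed


lemma om1_refl: "a \<in> Field omega1 \<Longrightarrow> (a,a) \<in> omega1"
  using om1_wo unfolding well_order_on_def linear_order_on_def partial_order_on_def
    preorder_on_def refl_on_def by blast

lemma U_right:
  assumes "w \<in> U_carrier" "v \<in> U_carrier" "upart w = 2" "U_less w v \<or> w = v"
  shows "upart v = 2 \<and> (fst (ukey w), fst (ukey v)) \<in> omega1"
  using assms om1_refl
  by (cases w; cases v) (auto simp: U_carrier_def U_less_def rkey_less_def w_less_def)

lemma U_left:
  assumes "w \<in> U_carrier" "u \<in> U_carrier" "upart w = 0" "U_less u w \<or> u = w"
  shows "upart u = 0 \<and> (fst (ukey w), fst (ukey u)) \<in> omega1"
  using assms om1_refl
  by (cases w; cases u) (auto simp: U_carrier_def U_less_def rkey_less_def w_less_def)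

lemma U_countable_idx:
  assumes "countable D"
  shows "countable {w\<in>U_carrier. upart w = 1 \<or> fst (ukey w) \<in> D}"
proof -
  have "{w\<in>U_carrier. upart w = 1 \<or> fst (ukey w) \<in> D} \<subseteq>
     range Mid \<union> RPt ` D \<union> (\<lambda>(a,q). RQ a q) ` (D \<times> UNIV) \<union> LPt ` D \<union> (\<lambda>(a,q). LQ a q) ` (D \<times> UNIV)"
  proof
    fix w assume "w \<in> {w\<in>U_carrier. upart w = 1 \<or> fst (ukey w) \<in> D}"
    then show "w \<in> range Mid \<union> RPt ` D \<union> (\<lambda>(a,q). RQ a q) ` (D \<times> UNIV) \<union> LPt ` D \<union> (\<lambda>(a,q). LQ a q) ` (D \<times> UNIV)"
      by (cases w) (auto simp: image_iff)
  qed
  moreover have "countable (range Mid \<union> RPt ` D \<union> (\<lambda>(a,q). RQ a q) ` (D \<times> UNIV) \<union> LPt ` D \<union> (\<lambda>(a,q). LQ a q) ` (D \<times> UNIV))"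
    using assms by auto
  ultimately show ?thesis using countable_subset by blast
qed

lemma U_between_countable:
  assumes u: "u \<in> U_carrier" and v: "v \<in> U_carrier"
  shows "countable {w\<in>U_carrier. (U_less u w \<or> u = w) \<and> (U_less w v \<or> w = v)}"
proof -
  define K where "K = (\<lambda>u. if upart u = 0 then {b. (b, fst (ukey u)) \<in> omega1} else {})"
  define K' where "K' = (\<lambda>u. if upart u = 2 then {b. (b, fst (ukey u)) \<in> omega1} else {})"
  have cK: "countable (K u)"
  proof (cases "upart u = 0")
    case True
    then have "fst (ukey u) \<in> Field omega1" using u by (cases u) (auto simp: U_carrier_def)
    then show ?thesis using True om1_under_countable by (simp add: K_def)
  qed (simp add: K_def)
  have cK': "countable (K' v)"
  proof (cases "upart v = 2")
    case True
    then have "fst (ukey v) \<in> Field omega1" using v by (cases v) (auto simp: U_carrier_def)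
    then show ?thesis using True om1_under_countable by (simp add: K'_def)
  qed (simp add: K'_def)
  have "{w\<in>U_carrier. (U_less u w \<or> u = w) \<and> (U_less w v \<or> w = v)} \<subseteq>
        {w\<in>U_carrier. upart w = 1 \<or> fst (ukey w) \<in> K u \<union> K' v}"
  proof
    fix w assume "w \<in> {w\<in>U_carrier. (U_less u w \<or> u = w) \<and> (U_less w v \<or> w = v)}"
    then have w: "w \<in> U_carrier" "U_less u w \<or> u = w" "U_less w v \<or> w = v" by auto
    have "upart w = 0 \<or> upart w = 1 \<or> upart w = 2" by (cases w) auto
    then have "upart w = 1 \<or> fst (ukey w) \<in> K u \<union> K' v"
    proof (elim disjE)
      assume "upart w = 0" then show ?thesis using U_left[OF w(1) u _ w(2)] by (simp add: K_def)
    next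
      assume "upart w = 2" then show ?thesis using U_right[OF w(1) v _ w(3)] by (simp add: K'_def)
    qed simp
    then show "w \<in> {w\<in>U_carrier. upart w = 1 \<or> fst (ukey w) \<in> K u \<union> K' v}" using w(1) by blast
  qed
  then show ?thesis using U_countable_idx[of "K u \<union> K' v"] cK cK' countable_subset by blast
qed

theorem theorem3p17:
  fixes L :: "'a::linorder set"
  shows "(\<forall>x\<in>L. \<forall>y\<in>L. sim_omega L x y) \<longleftrightarrow> embeds_in_U L"
proof
  assume E: "embeds_in_U L"
  then obtain f where f: "inj_on f L" "f ` L \<subseteq> U_carrier" "\<forall>x\<in>L. \<forall>y\<in>L. x < y \<longleftrightarrow> U_less (f x) (f y)"
    unfolding embeds_in_U_def by blast
  show "\<forall>x\<in>L. \<forall>y\<in>L. sim_omega L x y"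
  proof (intro ballI)
    fix x y assume x: "x \<in> L" and y: "y \<in> L"
    define a where "a = min x y"
    define b where "b = max x y"
    have ab: "a \<in> L" "b \<in> L" using x y by (auto simp: a_def b_def min_def max_def)
    have "f ` cinterval L x y \<subseteq> {w\<in>U_carrier. (U_less (f a) w \<or> f a = w) \<and> (U_less w (f b) \<or> w = f b)}"
    proof
      fix w assume "w \<in> f ` cinterval L x y"
      then obtain z where z: "z \<in> L" "a \<le> z" "z \<le> b" "w = f z"
        unfolding cinterval_def a_def b_def by blast
      show "w \<in> {w\<in>U_carrier. (U_less (f a) w \<or> f a = w) \<and> (U_less w (f b) \<or> w = f b)}"
        using z f(2,3) ab by (auto simp: order.order_iff_strict)
    qed
    then have "countable (f ` cinterval L x y)"
      using U_between_countable[of "f a" "f b"] f(2) ab countable_subset by blast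
    moreover have "inj_on f (cinterval L x y)"
      using f(1) by (rule inj_on_subset) (auto simp: cinterval_def)
    ultimately show "sim_omega L x y" unfolding sim_omega_def using countable_image_inj_on by blast
  qed
next
  assume A: "\<forall>x\<in>L. \<forall>y\<in>L. sim_omega L x y"
  show "embeds_in_U L"
  proof (cases "L = {}")
    case True then show ?thesis unfolding embeds_in_U_def by auto
  next
    case False
    then obtain x0 where x0: "x0 \<in> L" by blast
    define S1 where "S1 = {y\<in>L. x0 < y}"
    define S2 where "S2 = {y\<in>L. y < x0}"
    have c1: "\<forall>y\<in>S1. countable {z\<in>S1. z < y}"
    proof
      fix y assume "y \<in> S1"
      then have yL: "y \<in> L" by (simp add: S1_def)
      have mm: "min x0 y = x0" "max x0 y = y" using \<open>y \<in> S1\<close> by (auto simp: S1_def)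
      have "{z\<in>S1. z < y} \<subseteq> cinterval L x0 y" unfolding cinterval_def mm by (auto simp: S1_def)
      moreover have "countable (cinterval L x0 y)" using A x0 yL by (simp add: sim_omega_def)
      ultimately have "{z\<in>S1. z < y} \<subseteq> cinterval L x0 y" "countable (cinterval L x0 y)" by blast+
      then show "countable {z\<in>S1. z < y}" using countable_subset by blast
    qed
    have c2: "\<forall>y\<in>S2. countable {z\<in>S2. y < z}"
    proof
      fix y assume "y \<in> S2"
      then have yL: "y \<in> L" by (simp add: S2_def)
      have mm: "min x0 y = y" "max x0 y = x0" using \<open>y \<in> S2\<close> by (auto simp: S2_def)
      have "{z\<in>S2. y < z} \<subseteq> cinterval L x0 y" unfolding cinterval_def mm by (auto simp: S2_def)
      moreover have "countable (cinterval L x0 y)" using A x0 yL by (simp add: sim_omega_def)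
      ultimately have "{z\<in>S2. y < z} \<subseteq> cinterval L x0 y" "countable (cinterval L x0 y)" by blast+
      then show "countable {z\<in>S2. y < z}" using countable_subset by blast
    qed
    have t1: "\<forall>x\<in>S1. \<forall>y\<in>S1. \<forall>z\<in>S1. x < y \<longrightarrow> y < z \<longrightarrow> x < z" by auto
    have i1: "\<forall>x\<in>S1. \<not> x < x" by auto
    have o1: "\<forall>x\<in>S1. \<forall>y\<in>S1. x \<noteq> y \<longrightarrow> x < y \<or> y < x" by auto
    have t2: "\<forall>x\<in>S2. \<forall>y\<in>S2. \<forall>z\<in>S2. y < x \<longrightarrow> z < y \<longrightarrow> z < x" by auto
    have i2: "\<forall>x\<in>S2. \<not> x < x" by auto
    have o2: "\<forall>x\<in>S2. \<forall>y\<in>S2. x \<noteq> y \<longrightarrow> y < x \<or> x < y" by auto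
    have ex1: "\<exists>(i::'a \<Rightarrow> nat set) (q::'a \<Rightarrow> rat). (\<forall>y\<in>S1. i y \<in> Field omega1) \<and>
     (\<forall>x\<in>S1. \<forall>y\<in>S1. x < y \<longleftrightarrow> rkey_less (i x, True, q x) (i y, True, q y))"
      by (rule core_embed[of S1 "(<)", OF t1 i1 o1 c1])
    have ex2: "\<exists>(i::'a \<Rightarrow> nat set) (q::'a \<Rightarrow> rat). (\<forall>y\<in>S2. i y \<in> Field omega1) \<and>
     (\<forall>x\<in>S2. \<forall>y\<in>S2. y < x \<longleftrightarrow> rkey_less (i x, True, q x) (i y, True, q y))"
      by (rule core_embed[of S2 "\<lambda>a b. b < a", OF t2 i2 o2 c2])
    obtain i1 q1 where e1: "\<forall>y\<in>S1. i1 y \<in> Field omega1"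
      "\<forall>x\<in>S1. \<forall>y\<in>S1. x < y \<longleftrightarrow> rkey_less (i1 x, True, q1 x) (i1 y, True, q1 y)"
      using ex1 by (elim exE conjE)
    obtain i2 q2 where e2: "\<forall>y\<in>S2. i2 y \<in> Field omega1"
      "\<forall>x\<in>S2. \<forall>y\<in>S2. y < x \<longleftrightarrow> rkey_less (i2 x, True, q2 x) (i2 y, True, q2 y)"
      using ex2 by (elim exE conjE)
    define f where "f = (\<lambda>y. if y = x0 then Mid 0 else if x0 < y then RQ (i1 y) (q1 y) else LQ (i2 y) (q2 y))"
    have fU: "f ` L \<subseteq> U_carrier"
    proof
      fix w assume "w \<in> f ` L"
      then obtain y where y: "y \<in> L" "w = f y" by blast
      show "w \<in> U_carrier"
      proof (cases "y = x0")
        case False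
        then have "x0 < y \<or> y < x0" by auto
        then show ?thesis using y e1(1) e2(1) False
          by (auto simp: f_def U_carrier_def S1_def S2_def image_iff)
      qed (simp add: f_def U_carrier_def y)
    qed
    have ord: "x < y \<longleftrightarrow> U_less (f x) (f y)" if x: "x \<in> L" and y: "y \<in> L" for x y
    proof -
      have cx: "x = x0 \<or> x \<in> S1 \<or> x \<in> S2" using x by (auto simp: S1_def S2_def)
      have cy: "y = x0 \<or> y \<in> S1 \<or> y \<in> S2" using y by (auto simp: S1_def S2_def)
      have irr1: "\<not> rkey_less k k" for k by (cases k) (auto simp: rkey_less_def w_less_def)
      show ?thesis
        using cx cy e1(2)[rule_format, of x y] e2(2)[rule_format, of y x] irr1
        by (auto simp: f_def U_less_def S1_def S2_def)
    qed
    have "inj_on f L"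
    proof (rule inj_onI)
      fix x y assume xy: "x \<in> L" "y \<in> L" "f x = f y"
      have irrU: "\<not> U_less w w" for w
        by (cases w) (auto simp: U_less_def rkey_less_def w_less_def)
      show "x = y"
      proof (rule ccontr)
        assume "x \<noteq> y"
        then have "x < y \<or> y < x" by auto
        then show False using ord xy irrU by metis
      qed
    qed
    then show ?thesis unfolding embeds_in_U_def using fU ord by blast
  qed
qed

end
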